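(* For every weighted graph $G=(V,w)$, $\mathrm{cdim}(G)\le\widetilde{\mathrm{cdim}}(G)$.
   Context: An $n$-vertex weighted graph $G=(V,w)$ is given by $w\in\mathbb{R}_{\ge0}^{\binom n2}$. The edge set is $E=\{e: w(e)>0\}$, $m=|E|$. For $\emptyset\neq X\subsetneq V$, the cut $\Delta(X)$ is the set of edges of $E$ with exactly one endpoint in $X$, and $S_X\in\{0,1\}^{\binom n2}$ is the indicator of all pairs with exactly one endpoint in $X$; cut weight is $\langle S_X,w\rangle$ and $c^*$ is the minimum cut weight. $\mathcal{M}(G)$ is the set of minimum-weight cuts; $\chi(S)\in\{0,1\}^m$ is the characteristic vector of $S\subseteq E$ indexed by $E$; $\mathrm{cdim}(G)=\dim\,\mathrm{span}\{\chi(S):S\in\mathcal{M}(G)\}$. For $Y\in\mathbb{R}^{M\times N}$, $w\in\mathbb{R}^N$, $c\in\mathbb{R}^M$, the $(w,c)$ one-sided row-by-row $\ell_1$-approximate rank of $Y$ is the minimum rank of $\tilde Y$ with $\tilde Y\le Y$ entrywise and $\sum_j|w(j)(Y(i,j)-\tilde Y(i,j))|\le c(i)$ for all $i$. With $M_G$ the $(2^{n-1}-1)\times\binom n2$ matrix whose rows are the $S_X$ over all unordered bipartitions $\{X,V\setminus X\}$ into nonempty parts, and $c=M_Gw-c^*\mathbf{1}$, $\widetilde{\mathrm{cdim}}(G)$ is the $(w,c)$ one-sided row-by-row $\ell_1$-approximate rank of $M_G$. *)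

theory Defs
  imports "HOL-Analysis.Analysis"
begin

(* Vertex set V = UNIV of a finite type 'v.  Unordered pairs of distinct vertices
   are represented as 2-element sets; weights w are functions on 'v::finite set, of which
   only the values on pairs matter.  Vectors in R^(n choose 2) (resp. R^E) are
   represented as elements of real^('v::finite set) that vanish outside the pairs (resp. E). *)

definition pairs :: "'v::finite set set" where
  "pairs = {e. \<exists>a b. a \<noteq> b \<and> e = {a, b}}"

definition edges :: "('v::finite set \<Rightarrow> real) \<Rightarrow> 'v::finite set set" where
  "edges w = {e \<in> pairs. w e > 0}"

definition proper_side :: "'v::finite set \<Rightarrow> bool" where
  "proper_side X \<longleftrightarrow> X \<noteq> {} \<and> X \<noteq> UNIV"

definition cut_edges :: "('v::finite set \<Rightarrow> real) \<Rightarrow> 'v::finite set \<Rightarrow> 'v::finite set set" where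
  "cut_edges w X = {e \<in> edges w. card (e \<inter> X) = 1}"

definition S_vec :: "'v::finite set \<Rightarrow> real ^ ('v::finite set)" where
  "S_vec X = (\<chi> e. if e \<in> pairs \<and> card (e \<inter> X) = 1 then 1 else 0)"

definition cut_weight :: "('v::finite set \<Rightarrow> real) \<Rightarrow> 'v::finite set \<Rightarrow> real" where
  "cut_weight w X = (\<Sum>e\<in>pairs. S_vec X $ e * w e)"

definition min_cut_value :: "('v::finite set \<Rightarrow> real) \<Rightarrow> real" where
  "min_cut_value w = Min (cut_weight w ` {X. proper_side X})"

definition min_cuts :: "('v::finite set \<Rightarrow> real) \<Rightarrow> 'v::finite set set set" where
  "min_cuts w = {cut_edges w X | X. proper_side X \<and> cut_weight w X = min_cut_value w}"

definition char_vec :: "'v::finite set set \<Rightarrow> real ^ ('v::finite set)" where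
  "char_vec S = (\<chi> e. if e \<in> S then 1 else 0)"

definition cdim :: "('v::finite set \<Rightarrow> real) \<Rightarrow> nat" where
  "cdim w = dim (char_vec ` min_cuts w)"

definition bipartitions :: "'v::finite set set set" where
  "bipartitions = {{X, - X} | X. proper_side X}"

definition MG :: "'v::finite set set \<Rightarrow> 'v::finite set \<Rightarrow> real" where
  "MG B e = S_vec (SOME X. X \<in> B) $ e"

definition mat_rank :: "'v::finite set set set \<Rightarrow> ('v::finite set set \<Rightarrow> 'v::finite set \<Rightarrow> real) \<Rightarrow> nat" where
  "mat_rank R Y = dim ((\<lambda>i. \<chi> j. if j \<in> pairs then Y i j else 0) ` R)"

definition approx_rank ::
  "'v::finite set set set \<Rightarrow> ('v::finite set set \<Rightarrow> 'v::finite set \<Rightarrow> real) \<Rightarrow> ('v::finite set \<Rightarrow> real)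
     \<Rightarrow> ('v::finite set set \<Rightarrow> real) \<Rightarrow> nat" where
  "approx_rank R Y w c = (LEAST r. \<exists>Y'. r = mat_rank R Y' \<and>
      (\<forall>i\<in>R. \<forall>j\<in>pairs. Y' i j \<le> Y i j) \<and>
      (\<forall>i\<in>R. (\<Sum>j\<in>pairs. \<bar>w j * (Y i j - Y' i j)\<bar>) \<le> c i))"

definition cdim_tilde :: "('v::finite set \<Rightarrow> real) \<Rightarrow> nat" where
  "cdim_tilde w = approx_rank bipartitions MG w
      (\<lambda>B. (\<Sum>e\<in>pairs. MG B e * w e) - min_cut_value w)"

end

theory Submission
  imports Defs
begin

lemma card_compl_pair:
  assumes "e \<in> pairs"
  shows "card (e \<inter> - X) = 1 \<longleftrightarrow> card (e \<inter> X) = 1"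
proof -
  obtain a b where ab: "a \<noteq> b" "e = {a, b}" using assms unfolding pairs_def by blast
  show ?thesis using ab
    by (cases "a \<in> X"; cases "b \<in> X") (auto simp: Int_insert_left)
qed

lemma S_vec_compl: "S_vec (- X) = S_vec X"
proof -
  have "\<And>e. (e \<in> pairs \<and> card (e \<inter> - X) = 1) = (e \<in> pairs \<and> card (e \<inter> X) = 1)"
    using card_compl_pair by blast
  then show ?thesis unfolding S_vec_def by presburger
qed

lemma MG_bip:
  assumes "B = {X, - X}"
  shows "MG B e = S_vec X $ e"
proof -
  have "(SOME Y. Y \<in> B) \<in> B" using assms by (metis insertI1 someI)
  then show ?thesis using assms unfolding MG_def by (auto simp: S_vec_compl)
qed

lemma finite_pairs: "finite (pairs :: 'v::finite set set)" by simp

lemma feasible_exists: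
  fixes w :: "'v::finite set \<Rightarrow> real"
  shows "\<exists>Y'. (\<forall>i\<in>bipartitions. \<forall>j\<in>pairs. Y' i j \<le> MG i j) \<and>
      (\<forall>i\<in>bipartitions. (\<Sum>j\<in>pairs. \<bar>w j * (MG i j - Y' i j)\<bar>)
          \<le> (\<lambda>B. (\<Sum>e\<in>pairs. MG B e * w e) - min_cut_value w) i)"
proof (intro exI[of _ MG] conjI ballI)
  fix i :: "'v set set" assume "i \<in> bipartitions"
  then obtain X where X: "proper_side X" "i = {X, - X}" unfolding bipartitions_def by blast
  have "min_cut_value w \<le> cut_weight w X"
    unfolding min_cut_value_def using X(1) by (intro Min_le) auto
  then show "(\<Sum>j\<in>pairs. \<bar>w j * (MG i j - MG i j)\<bar>)
          \<le> (\<lambda>B. (\<Sum>e\<in>pairs. MG B e * w e) - min_cut_value w) i"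
    using X(2) by (simp add: MG_bip cut_weight_def)
qed auto

theorem lemma5:
  fixes w :: "'v::finite set \<Rightarrow> real"
  assumes "\<forall>e\<in>pairs. w e \<ge> 0"
  shows "cdim w \<le> cdim_tilde w"
proof -
  define P :: "real ^ ('v set) \<Rightarrow> real ^ ('v set)" where
    "P = (\<lambda>v. \<chi> e. if e \<in> edges w then v $ e else 0)"
  have linP: "linear P" unfolding P_def
    by (rule linearI) (auto simp: vec_eq_iff)
  have bound: "cdim w \<le> mat_rank bipartitions Y'"
    if f1: "\<forall>i\<in>bipartitions. \<forall>j\<in>pairs. Y' i j \<le> MG i j"
      and f2: "\<forall>i\<in>bipartitions. (\<Sum>j\<in>pairs. \<bar>w j * (MG i j - Y' i j)\<bar>)
          \<le> (\<lambda>B. (\<Sum>e\<in>pairs. MG B e * w e) - min_cut_value w) i" for Y'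
  proof -
    let ?rows = "(\<lambda>i. \<chi> j. if j \<in> pairs then Y' i j else 0) ` bipartitions"
    have sub: "char_vec ` min_cuts w \<subseteq> P ` ?rows"
    proof
      fix v assume "v \<in> char_vec ` min_cuts w"
      then obtain X where X: "proper_side X" "cut_weight w X = min_cut_value w"
        and v: "v = char_vec (cut_edges w X)"
        unfolding min_cuts_def by blast
      define B where "B = {X, - X}"
      have B: "B \<in> bipartitions" unfolding bipartitions_def B_def using X(1) by blast
      have "(\<Sum>j\<in>pairs. \<bar>w j * (MG B j - Y' B j)\<bar>) \<le> (\<Sum>e\<in>pairs. MG B e * w e) - min_cut_value w"
        using f2 B by auto
      also have "\<dots> = 0" using X(2) by (simp add: MG_bip B_def cut_weight_def)
      finally have "(\<Sum>j\<in>pairs. \<bar>w j * (MG B j - Y' B j)\<bar>) \<le> 0" .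
      then have "(\<Sum>j\<in>pairs. \<bar>w j * (MG B j - Y' B j)\<bar>) = 0"
        by (smt (verit) abs_ge_zero sum_nonneg)
      then have z: "\<forall>j\<in>pairs. \<bar>w j * (MG B j - Y' B j)\<bar> = 0"
        by (subst (asm) sum_nonneg_eq_0_iff) auto
      have "v = P ((\<lambda>i. \<chi> j. if j \<in> pairs then Y' i j else 0) B)"
      proof (unfold vec_eq_iff, rule allI)
        fix e
        show "v $ e = P ((\<lambda>i. \<chi> j. if j \<in> pairs then Y' i j else 0) B) $ e"
        proof (cases "e \<in> edges w")
          case True
          then have ep: "e \<in> pairs" "w e > 0" unfolding edges_def by auto
          with z have "Y' B e = MG B e" by auto
          then show ?thesis using True ep
            by (simp add: P_def v char_vec_def cut_edges_def MG_bip B_def S_vec_def)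
        next
          case False
          then show ?thesis by (simp add: P_def v char_vec_def cut_edges_def)
        qed
      qed
      then show "v \<in> P ` ?rows" using B by blast
    qed
    have "cdim w \<le> dim (P ` ?rows)" unfolding cdim_def by (rule dim_subset[OF sub])
    also have "\<dots> \<le> dim ?rows" by (rule dim_image_le[OF linP])
    finally show ?thesis unfolding mat_rank_def .
  qed
  obtain Y0 where Y0: "(\<forall>i\<in>bipartitions. \<forall>j\<in>pairs. Y0 i j \<le> MG i j) \<and>
      (\<forall>i\<in>bipartitions. (\<Sum>j\<in>pairs. \<bar>w j * (MG i j - Y0 i j)\<bar>)
          \<le> (\<lambda>B. (\<Sum>e\<in>pairs. MG B e * w e) - min_cut_value w) i)"
    using feasible_exists by blast
  let ?Q = "\<lambda>r. \<exists>Y'. r = mat_rank bipartitions Y' \<and>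
      (\<forall>i\<in>bipartitions. \<forall>j\<in>pairs. Y' i j \<le> MG i j) \<and>
      (\<forall>i\<in>bipartitions. (\<Sum>j\<in>pairs. \<bar>w j * (MG i j - Y' i j)\<bar>)
          \<le> (\<lambda>B. (\<Sum>e\<in>pairs. MG B e * w e) - min_cut_value w) i)"
  have "?Q (mat_rank bipartitions Y0)" using Y0 by blast
  then have "?Q (Least ?Q)" by (rule LeastI)
  then obtain Y1 where Y1: "Least ?Q = mat_rank bipartitions Y1"
      "\<forall>i\<in>bipartitions. \<forall>j\<in>pairs. Y1 i j \<le> MG i j"
      "\<forall>i\<in>bipartitions. (\<Sum>j\<in>pairs. \<bar>w j * (MG i j - Y1 i j)\<bar>)
          \<le> (\<lambda>B. (\<Sum>e\<in>pairs. MG B e * w e) - min_cut_value w) i"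
    by (elim exE conjE) (rule that)
  have "cdim w \<le> Least ?Q" unfolding Y1(1) by (rule bound[OF Y1(2) Y1(3)])
  then show ?thesis unfolding cdim_tilde_def approx_rank_def .
qed

end
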